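(* Let $\mathbf S=\langle S,\wedge,1\rangle$ be a complete meet semilattice, and let $\operatorname{Sub}\mathbf S$ denote the lattice of all complete subsemilattices of $\mathbf S$ (subsets closed under arbitrary meets). Then there is a dual isomorphism between the complete sublattices of $\operatorname{Sub}\mathbf S$ and the quasi-orders $\varepsilon$ on $S$ satisfying: (1)$'$ if $\bigwedge_i c_i\,\varepsilon\,d$ then there exist elements $d_i$ with $c_i\,\varepsilon\,d_i$ for each $i$ and $d=\bigwedge_i d_i$; (2) if $1\,\varepsilon\,d$ then $d=1$; (3)$'$ if $c\,\varepsilon\,c_i$ for all $i$, then $c\,\varepsilon\,\bigwedge_i c_i$; (4) $c\,\varepsilon\,1$ for all $c\in S$. Under this correspondence, a complete sublattice $\mathbf T$ corresponds to the quasi-order $\rho$ with $c\,\rho\,d$ iff $c\in X\Rightarrow d\in X$ for all $X\in\mathbf T$, and a quasi-order $\varepsilon$ corresponds to the lattice of $\varepsilon$-closed complete subsemilattices.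
   Context: A subset $X$ is $\varepsilon$-closed if $c\in X$ and $c\,\varepsilon\,d$ imply $d\in X$. A complete sublattice of $\operatorname{Sub}\mathbf S$ is a subset closed under arbitrary meets and joins computed in $\operatorname{Sub}\mathbf S$. Quasi-orders are ordered by inclusion. *)

theory Defs
  imports Main
begin

text \<open>A complete meet semilattice with top 1 (closed under arbitrary meets, the empty
meet being 1) is the same as a complete lattice; we model S as a type of class
complete_lattice, with meet Inf and 1 = top.\<close>

definition SubS :: "'a::complete_lattice set set" where
  "SubS = {X. \<forall>A. A \<subseteq> X \<longrightarrow> Inf A \<in> X}"

definition sub_meet :: "'a::complete_lattice set set \<Rightarrow> 'a set" where
  "sub_meet F = \<Inter>F"

definition sub_join :: "'a::complete_lattice set set \<Rightarrow> 'a set" where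
  "sub_join F = \<Inter>{Y \<in> SubS. \<Union>F \<subseteq> Y}"

definition complete_sublattice_Sub :: "'a::complete_lattice set set \<Rightarrow> bool" where
  "complete_sublattice_Sub T \<longleftrightarrow> T \<subseteq> SubS \<and>
     (\<forall>F. F \<subseteq> T \<longrightarrow> sub_meet F \<in> T \<and> sub_join F \<in> T)"

definition quasi_order :: "'a rel \<Rightarrow> bool" where
  "quasi_order e \<longleftrightarrow> refl e \<and> trans e"

text \<open>Quasi-orders satisfying (1)', (2), (3)', (4). Families are indexed by subsets C of S
(equivalent to arbitrary indexed families).\<close>
definition admissible_qo :: "'a::complete_lattice rel \<Rightarrow> bool" where
  "admissible_qo e \<longleftrightarrow> quasi_order e \<and>
     (\<forall>C d. (Inf C, d) \<in> e \<longrightarrow>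
        (\<exists>f. (\<forall>c\<in>C. (c, f c) \<in> e) \<and> d = Inf (f ` C))) \<and>
     (\<forall>d. (top, d) \<in> e \<longrightarrow> d = top) \<and>
     (\<forall>c C. (\<forall>c'\<in>C. (c, c') \<in> e) \<longrightarrow> (c, Inf C) \<in> e) \<and>
     (\<forall>c. (c, top) \<in> e)"

definition rho_of :: "'a::complete_lattice set set \<Rightarrow> 'a rel" where
  "rho_of T = {(c, d). \<forall>X\<in>T. c \<in> X \<longrightarrow> d \<in> X}"

definition closed_by :: "'a rel \<Rightarrow> 'a set \<Rightarrow> bool" where
  "closed_by e X \<longleftrightarrow> (\<forall>c d. c \<in> X \<and> (c, d) \<in> e \<longrightarrow> d \<in> X)"

definition lat_of :: "'a::complete_lattice rel \<Rightarrow> 'a set set" where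
  "lat_of e = {X \<in> SubS. closed_by e X}"

end

theory Submission
  imports Defs
begin

lemma Inf_UN_eq: "Inf (\<Union>b\<in>B. (g b :: 'a::complete_lattice set)) = (INF b\<in>B. Inf (g b))"
  by (rule antisym) (auto intro!: Inf_greatest INF_greatest intro: Inf_lower INF_lower2 Inf_lower2)

definition cl :: "'a::complete_lattice set \<Rightarrow> 'a set" where
  "cl U = {Inf A | A. A \<subseteq> U}"

lemma cl_SubS: "cl U \<in> SubS"
  unfolding SubS_def
proof (intro CollectI allI impI)
  fix B assume B: "B \<subseteq> cl U"
  then have "\<forall>b\<in>B. \<exists>A. A \<subseteq> U \<and> b = Inf A" unfolding cl_def by blast
  then obtain g where g: "\<forall>b\<in>B. g b \<subseteq> U \<and> b = Inf (g b)" by metis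
  have "Inf B = (INF b\<in>B. Inf (g b))" using g by (intro arg_cong[where f=Inf]) auto
  also have "\<dots> = Inf (\<Union>b\<in>B. g b)" by (rule Inf_UN_eq[symmetric])
  finally show "Inf B \<in> cl U" unfolding cl_def using g by blast
qed

lemma cl_sup: "U \<subseteq> cl U"
  unfolding cl_def by (auto intro!: exI[where x="{_}"])

lemma cl_least: "Y \<in> SubS \<Longrightarrow> U \<subseteq> Y \<Longrightarrow> cl U \<subseteq> Y"
  unfolding cl_def SubS_def by auto

lemma sub_join_eq: "sub_join F = cl (\<Union>F)"
proof (rule antisym)
  show "sub_join F \<subseteq> cl (\<Union>F)" unfolding sub_join_def
    using cl_SubS[of "\<Union>F"] cl_sup[of "\<Union>F"] by (intro Inter_lower) simp
  show "cl (\<Union>F) \<subseteq> sub_join F" unfolding sub_join_def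
    using cl_least by (intro Inter_greatest) blast
qed

lemma cl_id: "X \<in> SubS \<Longrightarrow> cl X = X"
  using cl_least[of X X] cl_sup[of X] by (intro antisym) simp_all

lemma join_in: "complete_sublattice_Sub T \<Longrightarrow> F \<subseteq> T \<Longrightarrow> sub_join F \<in> T"
  unfolding complete_sublattice_Sub_def by simp

lemma meet_in: "complete_sublattice_Sub T \<Longrightarrow> F \<subseteq> T \<Longrightarrow> sub_meet F \<in> T"
  unfolding complete_sublattice_Sub_def by simp

lemma SubS_top: "X \<in> SubS \<Longrightarrow> top \<in> X"
proof -
  assume "X \<in> SubS"
  then have "Inf {} \<in> X" unfolding SubS_def by blast
  then show "top \<in> X" by simp
qed

lemma lat_rho:
  assumes T: "complete_sublattice_Sub T"
  shows "lat_of (rho_of T) = T"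
proof
  show "T \<subseteq> lat_of (rho_of T)"
    using T unfolding lat_of_def complete_sublattice_Sub_def closed_by_def rho_of_def by auto
next
  show "lat_of (rho_of T) \<subseteq> T"
  proof
    fix X assume X: "X \<in> lat_of (rho_of T)"
    define Xc where "Xc c = \<Inter>{Y\<in>T. c\<in>Y}" for c
    have XcT: "Xc c \<in> T" for c
      using meet_in[OF T, of "{Y\<in>T. c\<in>Y}"] unfolding sub_meet_def Xc_def by auto
    have sub: "Xc c \<subseteq> X" if "c \<in> X" for c
    proof
      fix d assume "d \<in> Xc c"
      then have "(c, d) \<in> rho_of T" unfolding rho_of_def Xc_def by auto
      then show "d \<in> X" using X that unfolding lat_of_def closed_by_def by auto
    qed
    have "\<Union>(Xc ` X) = X" using sub unfolding Xc_def by auto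
    moreover have "X \<in> SubS" using X unfolding lat_of_def by auto
    ultimately have "sub_join (Xc ` X) = X" unfolding sub_join_eq by (simp add: cl_id)
    moreover have "sub_join (Xc ` X) \<in> T"
      using XcT by (intro join_in[OF T]) auto
    ultimately show "X \<in> T" by simp
  qed
qed

lemma rho_adm:
  assumes T: "complete_sublattice_Sub T"
  shows "admissible_qo (rho_of T)"
proof -
  have TS: "T \<subseteq> SubS" using T unfolding complete_sublattice_Sub_def by auto
  define Xc where "Xc c = \<Inter>{Y\<in>T. c\<in>Y}" for c
  have XcT: "Xc c \<in> T" for c
    using meet_in[OF T, of "{Y\<in>T. c\<in>Y}"] unfolding sub_meet_def Xc_def by auto
  have qo: "quasi_order (rho_of T)"
    unfolding quasi_order_def refl_on_def trans_def rho_of_def by auto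
  have c1: "\<exists>f. (\<forall>c\<in>C. (c, f c) \<in> rho_of T) \<and> d = Inf (f ` C)"
    if h: "(Inf C, d) \<in> rho_of T" for C d
  proof -
    let ?Y = "sub_join (Xc ` C)"
    have YT: "?Y \<in> T" using XcT by (intro join_in[OF T]) auto
    have "C \<subseteq> \<Union>(Xc ` C)" unfolding Xc_def by auto
    then have "C \<subseteq> ?Y" unfolding sub_join_eq using cl_sup by blast
    then have "Inf C \<in> ?Y" using YT TS unfolding SubS_def by blast
    then have "d \<in> ?Y" using h YT unfolding rho_of_def by auto
    then obtain A where A: "A \<subseteq> \<Union>(Xc ` C)" "d = Inf A"
      unfolding sub_join_eq cl_def by blast
    define f where "f c = Inf (A \<inter> Xc c)" for c
    have "Inf (f ` C) = Inf (\<Union>c\<in>C. A \<inter> Xc c)"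
      unfolding f_def by (rule Inf_UN_eq[symmetric])
    also have "(\<Union>c\<in>C. A \<inter> Xc c) = A" using A(1) by auto
    finally have e: "d = Inf (f ` C)" using A(2) by simp
    have "(c, f c) \<in> rho_of T" if "c \<in> C" for c
      unfolding rho_of_def
    proof (clarify)
      fix X assume "X \<in> T" "c \<in> X"
      then have "Xc c \<subseteq> X" unfolding Xc_def by auto
      moreover have "Xc c \<in> SubS" using XcT TS by auto
      then have "f c \<in> Xc c" unfolding f_def SubS_def by auto
      ultimately show "f c \<in> X" by auto
    qed
    with e show ?thesis by blast
  qed
  have "{top} \<in> T"
  proof -
    have "sub_join {} \<in> T" by (intro join_in[OF T]) auto
    moreover have "sub_join {} = ({top} :: 'a set)"
      unfolding sub_join_eq cl_def by auto
    ultimately show ?thesis by simp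
  qed
  then have c2: "(top, d) \<in> rho_of T \<Longrightarrow> d = top" for d unfolding rho_of_def by auto
  have c3: "(c, Inf C) \<in> rho_of T" if "\<forall>c'\<in>C. (c, c') \<in> rho_of T" for c C
    using that TS unfolding rho_of_def SubS_def by blast
  have c4: "(c, top) \<in> rho_of T" for c
    using TS SubS_top unfolding rho_of_def by blast
  show ?thesis unfolding admissible_qo_def using qo c1 c2 c3 c4 by blast
qed

lemma lat_adm:
  assumes e: "admissible_qo e"
  shows "complete_sublattice_Sub (lat_of e) \<and> rho_of (lat_of e) = e"
proof
  have refl: "(c, c) \<in> e" for c using e unfolding admissible_qo_def quasi_order_def refl_on_def by auto
  have tr: "trans e" using e unfolding admissible_qo_def quasi_order_def by auto
  have c1: "(Inf C, d) \<in> e \<Longrightarrow> \<exists>f. (\<forall>c\<in>C. (c, f c) \<in> e) \<and> d = Inf (f ` C)" for C d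
    using e unfolding admissible_qo_def by blast
  have c3: "\<forall>c'\<in>C. (c, c') \<in> e \<Longrightarrow> (c, Inf C) \<in> e" for c C
    using e unfolding admissible_qo_def by blast
  show "complete_sublattice_Sub (lat_of e)"
    unfolding complete_sublattice_Sub_def
  proof (intro conjI allI impI)
    show "lat_of e \<subseteq> SubS" unfolding lat_of_def by auto
    fix F assume F: "F \<subseteq> lat_of e"
    show "sub_meet F \<in> lat_of e"
    proof -
      have "\<Inter>F \<in> SubS" using F unfolding SubS_def lat_of_def by (auto intro: Inf_lower2)
      moreover have "closed_by e (\<Inter>F)" using F unfolding closed_by_def lat_of_def by auto
      ultimately show ?thesis unfolding sub_meet_def lat_of_def by simp
    qed
    have "closed_by e (cl (\<Union>F))"
      unfolding closed_by_def
    proof (intro allI impI)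
      fix c d assume "c \<in> cl (\<Union>F) \<and> (c, d) \<in> e"
      then obtain A where A: "A \<subseteq> \<Union>F" "c = Inf A" "(c, d) \<in> e" unfolding cl_def by blast
      then obtain f where f: "\<forall>a\<in>A. (a, f a) \<in> e" "d = Inf (f ` A)" using c1 by blast
      have "f ` A \<subseteq> \<Union>F"
      proof
        fix y assume "y \<in> f ` A"
        then obtain a where a: "a \<in> A" "y = f a" by blast
        then obtain X where "X \<in> F" "a \<in> X" using A by blast
        then show "y \<in> \<Union>F" using F f a unfolding lat_of_def closed_by_def by blast
      qed
      then show "d \<in> cl (\<Union>F)" unfolding cl_def using f by blast
    qed
    then show "sub_join F \<in> lat_of e" unfolding lat_of_def sub_join_eq using cl_SubS by blast
  qed
  show "rho_of (lat_of e) = e"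
  proof
    show "e \<subseteq> rho_of (lat_of e)" unfolding rho_of_def lat_of_def closed_by_def by auto
    show "rho_of (lat_of e) \<subseteq> e"
    proof clarify
      fix c d assume h: "(c, d) \<in> rho_of (lat_of e)"
      let ?X = "{x. (c, x) \<in> e}"
      have "?X \<in> SubS" unfolding SubS_def using c3 by blast
      moreover have "closed_by e ?X" unfolding closed_by_def using tr by (blast dest: transD)
      ultimately have Xl: "?X \<in> lat_of e" unfolding lat_of_def by blast
      have cX: "c \<in> ?X" using refl by simp
      have all: "\<forall>X\<in>lat_of e. c \<in> X \<longrightarrow> d \<in> X" using h unfolding rho_of_def by simp
      have "d \<in> ?X" using mp[OF bspec[OF all Xl] cX] .
      then show "(c, d) \<in> e" by simp
    qed
  qed
qed

theorem theorem8p2: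
  shows "bij_betw (rho_of :: 'a::complete_lattice set set \<Rightarrow> 'a rel)
            {T. complete_sublattice_Sub T} {e. admissible_qo e}
       \<and> (\<forall>T :: 'a set set. complete_sublattice_Sub T \<longrightarrow> lat_of (rho_of T) = T)
       \<and> (\<forall>e :: 'a rel. admissible_qo e \<longrightarrow>
            complete_sublattice_Sub (lat_of e) \<and> rho_of (lat_of e) = e)
       \<and> (\<forall>T1 T2 :: 'a set set. complete_sublattice_Sub T1 \<longrightarrow> complete_sublattice_Sub T2 \<longrightarrow>
            (T1 \<subseteq> T2 \<longleftrightarrow> rho_of T2 \<subseteq> rho_of T1))"
proof (intro conjI allI impI)
  show "bij_betw (rho_of :: 'a::complete_lattice set set \<Rightarrow> 'a rel)
            {T. complete_sublattice_Sub T} {e. admissible_qo e}"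
    unfolding bij_betw_def
  proof
    show "inj_on (rho_of :: 'a::complete_lattice set set \<Rightarrow> 'a rel) {T. complete_sublattice_Sub T}"
      by (rule inj_on_inverseI[where g=lat_of]) (simp add: lat_rho)
    show "rho_of ` {T. complete_sublattice_Sub T} = {e :: 'a rel. admissible_qo e}"
    proof
      show "rho_of ` {T. complete_sublattice_Sub T} \<subseteq> {e :: 'a rel. admissible_qo e}"
        using rho_adm by blast
      show "{e :: 'a rel. admissible_qo e} \<subseteq> rho_of ` {T. complete_sublattice_Sub T}"
        using lat_adm by (metis (mono_tags, lifting) CollectD CollectI image_eqI subsetI)
    qed
  qed
next
  fix T :: "'a set set" assume "complete_sublattice_Sub T"
  then show "lat_of (rho_of T) = T" by (rule lat_rho)
next
  fix e :: "'a rel" assume "admissible_qo e"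
  then show "complete_sublattice_Sub (lat_of e)" using lat_adm by blast
next
  fix e :: "'a rel" assume "admissible_qo e"
  then show "rho_of (lat_of e) = e" using lat_adm by blast
next
  fix T1 T2 :: "'a set set"
  assume h1: "complete_sublattice_Sub T1" and h2: "complete_sublattice_Sub T2"
  show "T1 \<subseteq> T2 \<longleftrightarrow> rho_of T2 \<subseteq> rho_of T1"
  proof
    assume "T1 \<subseteq> T2" then show "rho_of T2 \<subseteq> rho_of T1" unfolding rho_of_def by blast
  next
    assume r: "rho_of T2 \<subseteq> rho_of T1"
    have "lat_of (rho_of T1) \<subseteq> lat_of (rho_of T2)"
      using r unfolding lat_of_def closed_by_def by blast
    then show "T1 \<subseteq> T2" using lat_rho[OF h1] lat_rho[OF h2] by simp
  qed
qed

end
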